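(* Let $k$ be an unramified extension of $\mathbb{Q}_2$ with ring of integers $\mathfrak O_k$, let $C_{2^n}=\langle\sigma\rangle$ ($n\ge1$), and let $\mathcal A$ be a finitely generated $\mathfrak O_k[C_{2^n}]$-module that is torsion-free over $\mathfrak O_k$. Let $H$ be the subgroup of order $2$, $\mathrm{Tr}_H=1+\sigma^{2^{n-1}}$, $\mathcal A^H$ the submodule fixed by $H$, and $\mathrm{Tr}_H\mathcal A$ the image of $\mathrm{Tr}_H$. Then $Q:=\mathrm{Tr}_H\mathcal A/\big((\sigma-1)\mathrm{Tr}_H\mathcal A+2\mathcal A^H\big)$ is free over $\mathfrak O_k/2\mathfrak O_k$. Moreover, if $\mathcal B\subseteq\mathcal A$ is such that the images of $\mathrm{Tr}_H\mathcal B$ form an $\mathfrak O_k/2\mathfrak O_k$-basis of $Q$, then the images of $\mathcal B$ in $\mathcal A/\mathcal A^H$ can be extended to a basis of $\mathcal A/\mathcal A^H$ over $\mathfrak O_k[C_{2^n}]/\langle\mathrm{Tr}_H\rangle$. *)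

theory Defs
  imports Main "HOL-Computational_Algebra.Polynomial"
begin

text \<open>The ring of integers of an unramified (finite) extension of Q_2, characterised
  abstractly: an integral domain in which 2 is a nonzero non-unit, every nonzero element
  is a unit times a power of 2 (so it is a DVR with uniformiser 2), the residue ring
  modulo 2 is finite, and it is complete for the 2-adic topology.  By Cohen's structure
  theorem these are exactly the rings W(F_q) = O_k, k/Q_2 finite unramified.\<close>
definition unram_Z2_int :: "'a::idom itself \<Rightarrow> bool" where
  "unram_Z2_int _ \<longleftrightarrow>
     (2::'a) \<noteq> 0 \<and> \<not> (2::'a) dvd 1 \<and>
     (\<forall>x::'a. x \<noteq> 0 \<longrightarrow> (\<exists>u m. u dvd 1 \<and> x = u * 2 ^ m)) \<and>
     finite ((\<lambda>x::'a. {y. (2::'a) dvd (x - y)}) ` UNIV) \<and>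
     (\<forall>x :: nat \<Rightarrow> 'a.
        (\<forall>m. \<exists>N. \<forall>i\<ge>N. \<forall>j\<ge>N. (2::'a) ^ m dvd (x i - x j)) \<longrightarrow>
        (\<exists>L. \<forall>m. \<exists>N. \<forall>i\<ge>N. (2::'a) ^ m dvd (x i - L)))"

text \<open>Action of the group ring O[C_{2^n}] = O[X]/(X^{2^n}-1) on a module with
  generator s: a polynomial p acts as p(s).\<close>
definition gact :: "('a::comm_ring_1 \<Rightarrow> 'm::ab_group_add \<Rightarrow> 'm) \<Rightarrow> ('m \<Rightarrow> 'm)
                      \<Rightarrow> 'a poly \<Rightarrow> 'm \<Rightarrow> 'm" where
  "gact scale s p x = (\<Sum>i\<le>degree p. scale (coeff p i) ((s ^^ i) x))"

definition TrH :: "('m::ab_group_add \<Rightarrow> 'm) \<Rightarrow> nat \<Rightarrow> 'm \<Rightarrow> 'm" where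
  "TrH s n x = x + (s ^^ (2 ^ (n - 1))) x"

definition fixH :: "('m \<Rightarrow> 'm) \<Rightarrow> nat \<Rightarrow> 'm set" where
  "fixH s n = {x. (s ^^ (2 ^ (n - 1))) x = x}"

definition relQ :: "('a::comm_ring_1 \<Rightarrow> 'm::ab_group_add \<Rightarrow> 'm) \<Rightarrow> ('m \<Rightarrow> 'm) \<Rightarrow> nat \<Rightarrow> 'm set" where
  "relQ scale s n = {(s t - t) + scale 2 a | t a. t \<in> range (TrH s n) \<and> a \<in> fixH s n}"

text \<open>Kernel of O[X] \<rightarrow> O[C_{2^n}] \<rightarrow> O[C_{2^n}]/<Tr_H>.\<close>
definition trH_ideal :: "nat \<Rightarrow> 'a::comm_ring_1 poly set" where
  "trH_ideal n = {a * (monom 1 (2 ^ n) - 1) + b * (1 + monom 1 (2 ^ (n - 1))) | a b. True}"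

text \<open>qbasis scale I V N v J: the family (v j + N)_{j \<in> J} is a basis of the
  (R/I)-module V/N (where R acts on V via scale, I annihilates V/N, N \<subseteq> V).\<close>
definition qbasis :: "('r::comm_ring_1 \<Rightarrow> 'm::ab_group_add \<Rightarrow> 'm) \<Rightarrow> 'r set \<Rightarrow> 'm set \<Rightarrow> 'm set
                       \<Rightarrow> ('i \<Rightarrow> 'm) \<Rightarrow> 'i set \<Rightarrow> bool" where
  "qbasis scale I V N v J \<longleftrightarrow>
     v ` J \<subseteq> V \<and>
     (\<forall>y\<in>V. \<exists>S c. finite S \<and> S \<subseteq> J \<and> y - (\<Sum>j\<in>S. scale (c j) (v j)) \<in> N) \<and>
     (\<forall>S c. finite S \<longrightarrow> S \<subseteq> J \<longrightarrow> (\<Sum>j\<in>S. scale (c j) (v j)) \<in> N \<longrightarrow> (\<forall>j\<in>S. c j \<in> I))"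

end

theory Submission
  imports Defs
begin


locale gset = module scale for scale :: "'a::idom \<Rightarrow> 'm::ab_group_add \<Rightarrow> 'm" +
  fixes s :: "'m \<Rightarrow> 'm"
  assumes s_add: "s (x + y) = s x + s y"
    and s_lin: "s (scale c x) = scale c (s x)"
begin

lemma s_zero: "s 0 = 0"
  using s_add[of 0 0] by simp

lemma sp_add: "(s ^^ i) (x + y) = (s ^^ i) x + (s ^^ i) y"
  by (induct i) (auto simp: s_add)

lemma sp_scale: "(s ^^ i) (scale c x) = scale c ((s ^^ i) x)"
  by (induct i) (auto simp: s_lin)

lemma sp_zero: "(s ^^ i) 0 = 0"
  by (induct i) (auto simp: s_zero)

lemma sp_sum: "(s ^^ i) (sum f A) = (\<Sum>a\<in>A. (s ^^ i) (f a))"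
  by (induct A rule: infinite_finite_induct) (auto simp: sp_zero sp_add)

lemma s_sum: "s (sum f A) = (\<Sum>a\<in>A. s (f a))"
  using sp_sum[of 1] by simp

lemma sp_minus: "(s ^^ i) (- x) = - (s ^^ i) x"
proof -
  have "(s ^^ i) x + (s ^^ i) (- x) = 0" using sp_add[of i x "-x"] by (simp add: sp_zero)
  then show ?thesis by (metis add.inverse_unique)
qed

lemma sp_diff: "(s ^^ i) (x - y) = (s ^^ i) x - (s ^^ i) y"
  using sp_add[of i x "-y"] sp_minus[of i y] by simp

lemma s_diff: "s (x - y) = s x - s y"
  using sp_diff[of 1] by simp

abbreviation "ga \<equiv> gact scale s"

lemma ga_bound:
  assumes "degree p \<le> N"
  shows "ga p x = (\<Sum>i\<le>N. scale (coeff p i) ((s ^^ i) x))"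
  unfolding gact_def
  by (rule sum.mono_neutral_left) (use assms in \<open>auto simp: coeff_eq_0\<close>)

lemma ga_add_poly: "ga (p + q) x = ga p x + ga q x"
proof -
  let ?N = "max (degree p) (degree q)"
  have "degree (p + q) \<le> ?N" by (rule degree_add_le) auto
  then show ?thesis
    by (simp add: ga_bound[of p ?N] ga_bound[of q ?N] ga_bound[of "p+q" ?N]
        scale_left_distrib sum.distrib)
qed

lemma ga_add: "ga p (x + y) = ga p x + ga p y"
  by (simp add: gact_def sp_add scale_right_distrib sum.distrib)

lemma ga_scale: "ga p (scale c x) = scale c (ga p x)"
  by (simp add: gact_def sp_scale sum_distrib_left scale_sum_right mult.commute)


lemma ga_zero_right: "ga p 0 = 0"
  by (simp add: gact_def sp_zero)

lemma ga_zero_poly: "ga 0 x = 0"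
  by (simp add: gact_def)

lemma ga_smult: "ga (smult c p) x = scale c (ga p x)"
proof -
  have "degree (smult c p) \<le> degree p" by (rule degree_smult_le)
  then show ?thesis
    by (simp add: ga_bound[of "smult c p" "degree p"] ga_bound[of p "degree p"] scale_sum_right)
qed

lemma ga_const: "ga [:c:] x = scale c x"
  by (simp add: gact_def)

lemma ga_one: "ga 1 x = x"
  by (simp add: gact_def)

lemma ga_pCons: "ga (pCons a p) x = scale a x + s (ga p x)"
proof -
  have d: "degree (pCons a p) \<le> Suc (degree p)" by simp
  have "ga (pCons a p) x = (\<Sum>i\<le>Suc (degree p). scale (coeff (pCons a p) i) ((s ^^ i) x))"
    by (rule ga_bound[OF d])
  also have "\<dots> = scale a x + (\<Sum>i\<le>degree p. scale (coeff p i) ((s ^^ Suc i) x))"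
    by (subst sum.atMost_Suc_shift) simp
  also have "(\<Sum>i\<le>degree p. scale (coeff p i) ((s ^^ Suc i) x)) = s (ga p x)"
    by (simp add: gact_def s_sum s_lin)
  finally show ?thesis .
qed

lemma ga_neg_poly: "ga (- p) x = - ga p x"
proof -
  have "ga p x + ga (- p) x = 0" using ga_add_poly[of p "-p" x] by (simp add: ga_zero_poly)
  then show ?thesis by (metis add.inverse_unique)
qed

lemma ga_diff_poly: "ga (p - q) x = ga p x - ga q x"
  using ga_add_poly[of p "-q" x] ga_neg_poly[of q x] by simp

lemma ga_neg: "ga p (- x) = - ga p x"
proof -
  have "ga p x + ga p (- x) = 0" using ga_add[of p x "-x"] by (simp add: ga_zero_right)
  then show ?thesis by (metis add.inverse_unique)
qed

lemma ga_diff: "ga p (x - y) = ga p x - ga p y"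
  using ga_add[of p x "-y"] ga_neg[of p y] by simp

lemma ga_sum: "ga p (sum f A) = (\<Sum>a\<in>A. ga p (f a))"
  by (induct A rule: infinite_finite_induct) (auto simp: ga_zero_right ga_add)

lemma ga_sum_poly: "ga (sum f A) x = (\<Sum>a\<in>A. ga (f a) x)"
  by (induct A rule: infinite_finite_induct) (auto simp: ga_zero_poly ga_add_poly)

lemma ga_mult: "ga (p * q) x = ga p (ga q x)"
proof (induct p rule: pCons_induct)
  case 0
  then show ?case by (simp add: ga_zero_poly)
next
  case (pCons a p)
  have "ga (pCons a p * q) x = ga (smult a q + pCons 0 (p * q)) x" by (simp only: mult_pCons_left)
  also have "\<dots> = scale a (ga q x) + (scale 0 x + s (ga (p * q) x))"
    by (simp only: ga_add_poly ga_smult ga_pCons)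
  also have "\<dots> = scale a (ga q x) + s (ga p (ga q x))" using pCons(2) by simp
  also have "\<dots> = ga (pCons a p) (ga q x)" by (simp only: ga_pCons)
  finally show ?case .
qed

lemma ga_s_comm: "ga p (s x) = s (ga p x)"
  by (simp add: gact_def s_sum s_lin funpow_swap1)

lemma ga_X: "ga [:0, 1:] x = s x"
  by (simp add: ga_pCons ga_zero_poly s_zero)

lemma ga_monom: "ga (monom 1 k) x = (s ^^ k) x"
proof (induct k)
  case 0
  then show ?case by (simp add: ga_one)
next
  case (Suc k)
  have "monom (1::'a) (Suc k) = pCons 0 (monom 1 k)" by (simp add: monom_Suc)
  then show ?case using Suc by (simp only: ga_pCons) (simp add: s_zero)
qed

lemma module_ga: "module ga"
  by unfold_locales (simp_all add: ga_add ga_add_poly ga_mult ga_one)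

end



lemma unram_facts:
  assumes "unram_Z2_int TYPE('a::idom)"
  shows two_nz: "(2::'a) \<noteq> 0" and two_nu: "\<not> (2::'a) dvd 1"
    and unit_of: "\<And>c::'a. \<not> 2 dvd c \<Longrightarrow> c dvd 1"
    and pow2_zero: "\<And>c::'a. (\<forall>k. 2 ^ k dvd c) \<Longrightarrow> c = 0"
proof -
  have A: "(2::'a) \<noteq> 0" "\<not> (2::'a) dvd 1"
    "\<And>x::'a. x \<noteq> 0 \<Longrightarrow> \<exists>u m. u dvd 1 \<and> x = u * 2 ^ m"
    using assms unfolding unram_Z2_int_def by auto
  show "(2::'a) \<noteq> 0" "\<not> (2::'a) dvd 1" by (fact A(1), fact A(2))
  show "c dvd 1" if "\<not> 2 dvd c" for c :: 'a
  proof -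
    have "c \<noteq> 0" using that by auto
    then obtain u m where u: "u dvd 1" "c = u * 2 ^ m" using A(3) by blast
    show ?thesis
    proof (cases m)
      case 0 then show ?thesis using u by simp
    next
      case (Suc k) then have "2 dvd c" using u by simp
      then show ?thesis using that by blast
    qed
  qed
  show "c = 0" if "\<forall>k. 2 ^ k dvd c" for c :: 'a
  proof (rule ccontr)
    assume "c \<noteq> 0"
    then obtain u m where u: "u dvd 1" "c = u * 2 ^ m" using A(3) by blast
    have "2 ^ m * 2 dvd 2 ^ m * u" using that[rule_format, of "Suc m"] u(2)
      by (simp add: mult.commute)
    then have "2 dvd u" using A(1) by (simp add: dvd_mult_cancel_left)
    then have "(2::'a) dvd 1" using u(1) dvd_trans by blast
    then show False using A(2) by blast
  qed
qed

definition mindep :: "('a::comm_ring_1 \<Rightarrow> 'b::ab_group_add \<Rightarrow> 'b) \<Rightarrow> 'b set \<Rightarrow> 'b set \<Rightarrow> bool" where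
  "mindep sc W B \<longleftrightarrow> (\<forall>S c. finite S \<longrightarrow> S \<subseteq> B \<longrightarrow> (\<Sum>j\<in>S. sc (c j) j) \<in> W \<longrightarrow> (\<forall>j\<in>S. (2::'a) dvd c j))"

context module
begin

lemma subspace_plus: "subspace S \<Longrightarrow> subspace T \<Longrightarrow> subspace {x + y | x y. x \<in> S \<and> y \<in> T}"
  apply (rule subspaceI)
  apply (metis (mono_tags, lifting) add_0 mem_Collect_eq subspace_0)
  apply (clarsimp) 
  subgoal for x y x' y' by (rule exI[of _ "x + y"], rule exI[of _ "x' + y'"]) (auto simp: subspace_add add_ac)
  apply clarsimp
  subgoal for c x y by (rule exI[of _ "c *s x"], rule exI[of _ "c *s y"]) (auto simp: subspace_scale scale_right_distrib)
  done

lemma ext_indep: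
  fixes W V G B :: "'b set"
  assumes unit: "\<And>c::'a. \<not> 2 dvd c \<Longrightarrow> c dvd 1"
    and W: "subspace W" and G: "finite G" "G \<subseteq> V" and V2: "\<And>x. x \<in> V \<Longrightarrow> 2 *s x \<in> W"
    and B: "mindep scale W B"
  shows "\<exists>Y\<subseteq>G. mindep scale W (B \<union> Y) \<and> G \<subseteq> {a + w | a w. a \<in> span (B \<union> Y) \<and> w \<in> W}"
proof -
  let ?C = "{Y. Y \<subseteq> G \<and> mindep scale W (B \<union> Y)}"
  have "?C \<subseteq> Pow G" by auto
  then have fin: "finite ?C" by (rule finite_subset) (simp add: G(1))
  have "{} \<in> ?C" using B by simp
  then have ne: "?C \<noteq> {}" by blast
  from finite_has_maximal[OF fin ne] obtain Y where Y: "Y \<in> ?C" and max0: "\<forall>b\<in>?C. Y \<le> b \<longrightarrow> Y = b" ..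
  have max: "\<And>Z. Z \<in> ?C \<Longrightarrow> Y \<subseteq> Z \<Longrightarrow> Y = Z" using max0 by blast
  have "g \<in> {a + w | a w. a \<in> span (B \<union> Y) \<and> w \<in> W}" if g: "g \<in> G" for g
  proof (cases "g \<in> B \<union> Y")
    case True
    then show ?thesis using subspace_0[OF W] by (intro CollectI exI[of _ g] exI[of _ 0]) (auto intro: span_base)
  next
    case False
    then have "g \<notin> Y" by auto
    then have "insert g Y \<notin> ?C" using max[of "insert g Y"] by auto
    then have "\<not> mindep scale W (B \<union> insert g Y)" using g Y by auto
    then obtain S c j where S: "finite S" "S \<subseteq> insert g (B \<union> Y)" "(\<Sum>j\<in>S. c j *s j) \<in> W"
      and j: "j \<in> S" "\<not> 2 dvd c j"
      unfolding mindep_def by auto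
    have iY: "mindep scale W (B \<union> Y)" using Y by auto
    have gS: "g \<in> S"
    proof (rule ccontr)
      assume "g \<notin> S"
      then have "S \<subseteq> B \<union> Y" using S(2) by auto
      then show False using iY S j unfolding mindep_def by blast
    qed
    let ?S = "S - {g}"
    have S': "finite ?S" "?S \<subseteq> B \<union> Y" using S by auto
    have split: "(\<Sum>j\<in>S. c j *s j) = c g *s g + (\<Sum>j\<in>?S. c j *s j)"
      using S(1) gS by (simp add: sum.remove)
    show ?thesis
    proof (cases "2 dvd c g")
      case True
      then obtain e where e: "c g = 2 * e" by blast
      have "c g *s g = e *s (2 *s g)" using e by (simp add: mult.commute)
      moreover have "2 *s g \<in> W" using V2 G(2) g by blast
      ultimately have "c g *s g \<in> W" using W subspace_scale by metis
      then have "(\<Sum>j\<in>?S. c j *s j) \<in> W" using S(3) split W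
        by (metis add_diff_cancel_left' subspace_diff)
      then have "\<forall>j\<in>?S. 2 dvd c j" using iY S' unfolding mindep_def by blast
      then show ?thesis using j True by (cases "j = g") auto
    next
      case False
      then obtain u where u: "1 = c g * u" using unit by blast
      have "g = u *s (\<Sum>j\<in>S. c j *s j) + (- (u *s (\<Sum>j\<in>?S. c j *s j)))"
        using u by (simp add: split scale_right_distrib mult.commute)
      moreover have "- (u *s (\<Sum>j\<in>?S. c j *s j)) \<in> span (B \<union> Y)"
        using S' by (intro span_neg span_scale span_sum) (auto intro: span_base)
      moreover have "u *s (\<Sum>j\<in>S. c j *s j) \<in> W" using W S(3) by (simp add: subspace_scale)
      ultimately show ?thesis
        by (intro CollectI exI[of _ "- (u *s (\<Sum>j\<in>?S. c j *s j))"] exI[of _ "u *s (\<Sum>j\<in>S. c j *s j)"]) (simp add: add.commute)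
    qed
  qed
  then show ?thesis using Y by blast
qed

lemma nakayama:
  fixes P :: "'b set"
  assumes unit: "\<And>c::'a. \<not> 2 dvd c \<Longrightarrow> c dvd 1" and two: "\<not> (2::'a) dvd 1"
  shows "finite G \<Longrightarrow> subspace P \<Longrightarrow> (\<forall>x\<in>span G. \<exists>p\<in>P. \<exists>z\<in>span G. x = p + 2 *s z) \<Longrightarrow> span G \<subseteq> P"
proof (induct G rule: finite_induct)
  case empty
  then show ?case by (simp add: subspace_0)
next
  case (insert g G)
  have "g \<in> span (insert g G)" by (rule span_base) simp
  then obtain p z where p: "p \<in> P" "z \<in> span (insert g G)" "g = p + 2 *s z" using insert(5) by blast
  obtain k where k: "z - k *s g \<in> span G" using p(2) span_breakdown_eq by blast
  define z' where "z' = z - k *s g"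
  have "(1 - 2 * k) *s g = p + 2 *s z'"
    using p(3) unfolding z'_def by (simp add: algebra_simps scale_left_diff_distrib)
  moreover have "\<not> 2 dvd (1 - 2 * k)"
  proof
    assume "2 dvd (1 - 2 * k)"
    then have "2 dvd (1 - 2 * k) + 2 * k" by (intro dvd_add) auto
    then show False using two by simp
  qed
  then obtain u where u: "1 = (1 - 2 * k) * u" using unit by blast
  ultimately have gd: "g = u *s p + (2 * u) *s z'"
    by (metis mult.commute scale_right_distrib scale_one scale_scale)
  have z'G: "z' \<in> span G" using k z'_def by simp
  have IH: "span G \<subseteq> P"
  proof (rule insert(3)[OF insert(4)], intro ballI)
    fix x assume x: "x \<in> span G"
    then have "x \<in> span (insert g G)" using span_mono[of G "insert g G"] by blast
    then obtain q w where q: "q \<in> P" "w \<in> span (insert g G)" "x = q + 2 *s w" using insert(5) by blast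
    obtain m where m: "w - m *s g \<in> span G" using q(2) span_breakdown_eq by blast
    have "x = (q + (2 * m * u) *s p) + 2 *s ((w - m *s g) + (m * 2 * u) *s z')"
      using q(3) gd by (simp add: algebra_simps)
    moreover have "q + (2 * m * u) *s p \<in> P" using q(1) p(1) insert(4)
      by (simp add: subspace_add subspace_scale)
    moreover have "(w - m *s g) + (m * 2 * u) *s z' \<in> span G" using m z'G
      by (simp add: span_add span_scale)
    ultimately show "\<exists>p\<in>P. \<exists>z\<in>span G. x = p + 2 *s z" by blast
  qed
  have gP: "g \<in> P" using gd p(1) IH z'G insert(4) by (auto simp: subspace_add subspace_scale)
  show ?case
  proof
    fix x assume "x \<in> span (insert g G)"
    then obtain m where "x - m *s g \<in> span G" using span_breakdown_eq by blast
    then have "x - m *s g \<in> P" using IH by blast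
    moreover have "m *s g \<in> P" using gP insert(4) by (rule subspace_scale[rotated])
    ultimately have "(x - m *s g) + m *s g \<in> P" using insert(4) subspace_add by blast
    then show "x \<in> P" by simp
  qed
qed

end



lemma pi_pow2: "\<exists>r. [:-1, 1::'a::comm_ring_1:] ^ (2 ^ m) = 1 + monom 1 (2 ^ m) + 2 * r"
proof (induct m)
  case 0
  have "[:-1, 1::'a:] = 1 + monom 1 1 + 2 * [:-1:]"
    by (simp add: monom_Suc monom_0 numeral_mult_conv_smult one_pCons numeral_poly)
  then have "[:-1, 1::'a:] ^ (2^0) = 1 + monom 1 (2^0) + 2 * [:-1:]" by (simp only: power_0 power_one_right)
  then show ?case by blast
next
  case (Suc m)
  then obtain r where r: "[:-1, 1::'a:] ^ (2 ^ m) = 1 + monom 1 (2 ^ m) + 2 * r" by blast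
  let ?M = "monom (1::'a) (2 ^ m)"
  have MM: "?M * ?M = monom 1 (2 ^ Suc m)" by (simp add: mult_monom mult_2)
  have "[:-1, 1::'a:] ^ (2 ^ Suc m) = ([:-1, 1::'a:] ^ (2 ^ m)) * ([:-1, 1::'a:] ^ (2 ^ m))"
    by (simp add: power_mult[symmetric] mult_2 power_add)
  also have "\<dots> = 1 + ?M * ?M + 2 * (?M + 2 * r + 2 * r * ?M + 2 * r * r)"
    unfolding r by (simp add: algebra_simps)
  finally show ?case unfolding MM by blast
qed

lemma pi_dvd_monom: "[:-1, 1::'a::comm_ring_1:] dvd monom 1 k - 1"
proof -
  have "poly (monom (1::'a) k - 1) 1 = 0" by (simp add: poly_monom)
  then show ?thesis using poly_eq_0_iff_dvd[of "monom (1::'a) k - 1" 1] by simp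
qed

lemma two_pow_mult: "(2::'a::comm_ring_1 poly) ^ m * a = smult (2 ^ m) a"
proof (induct m)
  case 0 then show ?case by simp
next
  case (Suc m)
  have "(2::'a poly) ^ Suc m * a = (2 ^ m * a) + (2 ^ m * a)" by (simp only: power_Suc mult.assoc mult_2 distrib_right)
  also have "\<dots> = smult (2 ^ Suc m) a" unfolding Suc by (simp only: power_Suc mult_2 smult_add_left)
  finally show ?case .
qed

context
  fixes h :: nat
  assumes h1: "h \<ge> 1"
begin

lemma D_deg: "degree (1 + monom (1::'a::idom) h) = h"
  using h1 by (subst degree_add_eq_right) (auto simp: degree_monom_eq)

lemma D_lc: "coeff (1 + monom (1::'a::idom) h) h = 1"
  using h1 by (simp add: coeff_monom)

lemma D_nz: "(1 + monom (1::'a::idom) h) \<noteq> 0"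
proof
  assume "(1 + monom (1::'a::idom) h) = 0"
  then have "coeff (1 + monom (1::'a::idom) h) h = 0" by simp
  then show False using D_lc by simp
qed

lemma divmono: "\<exists>q r. p = (1 + monom (1::'a::idom) h) * q + r \<and> degree r < h"
proof -
  let ?D = "1 + monom (1::'a) h"
  obtain q r where qr: "pseudo_divmod p ?D = (q, r)" by (cases "pseudo_divmod p ?D") auto
  have lc: "coeff ?D (degree ?D) = 1" by (simp only: D_deg D_lc)
  have A: "smult (coeff ?D (degree ?D) ^ (Suc (degree p) - degree ?D)) p = ?D * q + r"
    and B: "r = 0 \<or> degree r < degree ?D" using pseudo_divmod[OF D_nz qr] by blast+
  have "p = ?D * q + r" using A unfolding lc by simp
  moreover from B have "degree r < h"
  proof
    assume "r = 0" with h1 show ?thesis by simp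
  next
    assume "degree r < degree ?D" then show ?thesis by (simp only: D_deg)
  qed
  ultimately show ?thesis by blast
qed

lemma div_uniq:
  assumes "(1 + monom (1::'a::idom) h) * q + r = (1 + monom 1 h) * q' + r'" "degree r < h" "degree r' < h"
  shows "r = r'"
proof (rule ccontr)
  let ?D = "1 + monom (1::'a) h"
  assume ne: "r \<noteq> r'"
  have eq: "?D * (q - q') = r' - r" using assms(1) by (simp add: algebra_simps)
  then have "q - q' \<noteq> 0" using ne by auto
  then have "degree (?D * (q - q')) = h + degree (q - q')"
    using degree_mult_eq[OF D_nz \<open>q - q' \<noteq> 0\<close>] D_deg by simp
  moreover have "degree (r' - r) < h"
    using assms(2,3) degree_diff_le_max[of r' r] by auto
  ultimately show False using eq by simp
qed

lemma dvd_of_pow2: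
  assumes pz: "\<And>c::'a::idom. (\<forall>k. 2 ^ k dvd c) \<Longrightarrow> c = 0"
    and all: "\<forall>m. \<exists>a b. p = 2 ^ m * a + b * (1 + monom (1::'a) h)"
  shows "(1 + monom (1::'a) h) dvd p"
proof -
  let ?D = "1 + monom (1::'a) h"
  obtain q r where qr: "p = ?D * q + r" "degree r < h" using divmono by blast
  have "\<forall>m. \<forall>i. 2 ^ m dvd coeff r i"
  proof (intro allI)
    fix m i
    obtain a b where ab: "p = 2 ^ m * a + b * ?D" using all by blast
    obtain qa ra where qa: "a = ?D * qa + ra" "degree ra < h" using divmono by blast
    have "p = smult (2 ^ m) a + b * ?D" using ab by (simp add: two_pow_mult)
    also have "smult (2 ^ m) a = ?D * smult (2 ^ m) qa + smult (2 ^ m) ra"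
      unfolding qa(1) by (simp add: smult_add_right mult_smult_right)
    finally have "p = ?D * (smult (2 ^ m) qa + b) + smult (2 ^ m) ra"
      by (simp add: algebra_simps)
    moreover have "degree (smult (2 ^ m) ra) < h" using qa(2) degree_smult_le[of "2^m" ra] by linarith
    ultimately have "r = smult (2 ^ m) ra" using div_uniq qr by metis
    then show "2 ^ m dvd coeff r i" by simp
  qed
  then have "r = 0" using pz by (intro poly_eqI) auto
  then show ?thesis using qr by simp
qed

end



locale msetup = gset scale s for scale :: "'a::idom \<Rightarrow> 'm::ab_group_add \<Rightarrow> 'm" and s +
  fixes n :: nat and S0 :: "'m set"
  assumes Ok: "unram_Z2_int TYPE('a)" and n1: "n \<ge> 1" and s_ord: "s ^^ (2^n) = id"
    and tf: "\<forall>c x. scale c x = 0 \<longrightarrow> c = 0 \<or> x = 0"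
    and S0: "finite S0" "\<forall>x. \<exists>c. x = (\<Sum>g\<in>S0. gact scale s (c g) g)"
begin

abbreviation "h \<equiv> (2::nat) ^ (n - 1)"
abbreviation "tau \<equiv> s ^^ h"
abbreviation "T \<equiv> TrH s n"
abbreviation "F \<equiv> fixH s n"
abbreviation "R \<equiv> relQ scale s n"

lemma unit2: "\<not> (2::'a) dvd c \<Longrightarrow> c dvd 1"
  using unit_of[OF Ok] by blast

lemma hh: "h + h = 2 ^ n" using n1 by (cases n) auto

lemma tau_tau: "tau (tau x) = x"
proof -
  have "tau (tau x) = (s ^^ (h + h)) x" by (simp add: funpow_add)
  also have "\<dots> = x" by (simp only: hh s_ord id_apply)
  finally show ?thesis .
qed

lemma tau_tau': "(s ^^ 2 ^ (n - Suc 0)) ((s ^^ 2 ^ (n - Suc 0)) x) = x"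
  using tau_tau[of x] by simp

lemma T_def': "T x = x + tau x" by (simp add: TrH_def)
lemma F_iff: "x \<in> F \<longleftrightarrow> tau x = x" by (simp add: fixH_def)
lemma T_add: "T (x + y) = T x + T y" by (simp add: TrH_def sp_add add_ac)
lemma T_scale: "T (scale c x) = scale c (T x)" by (simp add: TrH_def sp_scale scale_right_distrib)
lemma T_s: "T (s x) = s (T x)" by (simp add: TrH_def s_add funpow_swap1)
lemma T_zero: "T 0 = 0" by (simp add: TrH_def sp_zero)
lemma T_diff: "T (x - y) = T x - T y" by (simp add: TrH_def sp_diff)
lemma T_sum: "T (sum f A) = (\<Sum>a\<in>A. T (f a))"
  by (induct A rule: infinite_finite_induct) (auto simp: T_zero T_add)
lemma T_in_F: "T x \<in> F" unfolding F_iff T_def' sp_add tau_tau by (rule add.commute)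
lemma scale2: "scale 2 x = x + x"
  using scale_left_distrib[of 1 1 x] by (simp add: one_add_one)
lemma T_F: "x \<in> F \<Longrightarrow> T x = scale 2 x" by (simp add: F_iff T_def' scale2)

lemma F_sub: "subspace F"
  by (rule subspaceI) (auto simp: F_iff sp_zero sp_add sp_scale)

lemma spi_comm: "(s ^^ i) (ga p x) = ga p ((s ^^ i) x)"
  by (induct i) (auto simp: ga_s_comm)

lemma F_ga: "x \<in> F \<Longrightarrow> ga p x \<in> F"
  by (simp add: F_iff spi_comm)

lemma ga_D: "ga (1 + monom 1 h) x = T x"
  by (simp add: ga_add_poly ga_one ga_monom T_def')

lemma ga_pi: "ga [:-1, 1:] x = s x - x"
  by (simp add: ga_pCons ga_zero_poly s_zero)

lemma spN: "(s ^^ (2 ^ n * q)) x = x"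
  by (induct q) (auto simp: funpow_add s_ord)

lemma sp_mod: "(s ^^ i) x = (s ^^ (i mod 2 ^ n)) x"
proof -
  have "i = i mod 2 ^ n + 2 ^ n * (i div 2 ^ n)" by simp
  then have "(s ^^ i) x = (s ^^ (i mod 2 ^ n)) ((s ^^ (2 ^ n * (i div 2 ^ n))) x)"
    by (metis comp_apply funpow_add)
  then show ?thesis by (simp add: spN)
qed

definition "G0 = (\<lambda>(g, i). (s ^^ i) g) ` (S0 \<times> {..<2 ^ n})"

lemma G0_fin: "finite G0" unfolding G0_def using S0(1) by simp

lemma span_G0: "span G0 = UNIV"
proof -
  have "x \<in> span G0" for x
  proof -
    obtain c where c: "x = (\<Sum>g\<in>S0. ga (c g) g)" using S0(2) by blast
    have "ga (c g) g \<in> span G0" if g: "g \<in> S0" for g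
    proof -
      have "(s ^^ i) g \<in> G0" for i
        using g unfolding G0_def sp_mod[of i g] by (auto intro!: image_eqI[of _ _ "(g, i mod 2 ^ n)"])
      then show ?thesis unfolding gact_def
        by (intro span_sum span_scale span_base) auto
    qed
    then show ?thesis unfolding c by (intro span_sum) auto
  qed
  then show ?thesis by auto
qed

lemma T_hom: "module_hom scale scale T"
  unfolding module_hom_iff using module_axioms by (auto simp: T_add T_scale)

lemma range_T: "range T = span (T ` G0)"
  using module_hom.span_image[OF T_hom, of G0] span_G0 by simp

lemma R_sub: "subspace R"
proof (rule subspaceI)
  show "0 \<in> R" unfolding relQ_def
    by (rule CollectI, rule exI[of _ 0], rule exI[of _ 0])
       (auto simp: s_zero F_iff sp_zero intro!: image_eqI[of _ _ 0] T_zero[symmetric])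
next
  fix x y assume "x \<in> R" "y \<in> R"
  then obtain t a t' a' where ta: "x = (s t - t) + scale 2 a" "t \<in> range T" "a \<in> F"
     "y = (s t' - t') + scale 2 a'" "t' \<in> range T" "a' \<in> F"
    unfolding relQ_def by blast
  obtain u u' where u: "t = T u" "t' = T u'" using ta by blast
  have "x + y = (s (t + t') - (t + t')) + scale 2 (a + a')"
    unfolding ta(1) ta(4) by (simp add: s_add scale_right_distrib algebra_simps)
  moreover have "t + t' \<in> range T" using u T_add by (metis rangeI)
  moreover have "a + a' \<in> F" using ta F_sub subspace_add by blast
  ultimately show "x + y \<in> R" unfolding relQ_def by blast
next
  fix c x assume "x \<in> R"
  then obtain t a where ta: "x = (s t - t) + scale 2 a" "t \<in> range T" "a \<in> F"
    unfolding relQ_def by blast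
  obtain u where u: "t = T u" using ta by blast
  have "scale c x = (s (scale c t) - scale c t) + scale 2 (scale c a)"
    unfolding ta(1) by (simp add: s_lin scale_right_distrib scale_right_diff_distrib mult.commute)
  moreover have "scale c t \<in> range T" using u T_scale by (metis rangeI)
  moreover have "scale c a \<in> F" using ta F_sub subspace_scale by blast
  ultimately show "scale c x \<in> R" unfolding relQ_def by blast
qed

lemma R_2: "x \<in> range T \<Longrightarrow> scale 2 x \<in> R"
  unfolding relQ_def
  by (rule CollectI, rule exI[of _ 0], rule exI[of _ x])
     (auto simp: s_zero T_in_F intro!: image_eqI[of _ _ 0] T_zero[symmetric])

lemma part1: "\<exists>X. qbasis scale {c. (2::'a) dvd c} (range T) R id X"
proof -
  have m0: "mindep scale R {}" unfolding mindep_def by auto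
  obtain Y where Y: "Y \<subseteq> T ` G0" "mindep scale R ({} \<union> Y)"
     "T ` G0 \<subseteq> {a + w | a w. a \<in> span ({} \<union> Y) \<and> w \<in> R}"
    using ext_indep[OF unit2 R_sub _ _ R_2 m0, of "T ` G0" "range T"] G0_fin by auto
  have sub: "subspace {a + w | a w. a \<in> span Y \<and> w \<in> R}"
    by (rule subspace_plus) (auto simp: R_sub)
  have rT: "range T \<subseteq> {a + w | a w. a \<in> span Y \<and> w \<in> R}"
    unfolding range_T by (rule span_minimal) (use Y(3) sub in auto)
  show ?thesis
  proof (intro exI[of _ Y], unfold qbasis_def, intro conjI allI ballI impI)
    show "id ` Y \<subseteq> range T" using Y(1) by auto
  next
    fix y assume "y \<in> range T"
    then obtain a w where aw: "y = a + w" "a \<in> span Y" "w \<in> R" using rT by blast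
    then obtain t r where tr: "finite t" "t \<subseteq> Y" "a = (\<Sum>v\<in>t. scale (r v) v)"
      unfolding span_explicit by blast
    show "\<exists>S c. finite S \<and> S \<subseteq> Y \<and> y - (\<Sum>j\<in>S. scale (c j) (id j)) \<in> R"
      using aw tr by (intro exI[of _ t] exI[of _ r]) auto
  next
    fix S c j assume "finite S" "S \<subseteq> Y" "(\<Sum>j\<in>S. scale (c j) (id j)) \<in> R" "j \<in> S"
    then show "c j \<in> {c. 2 dvd c}" using Y(2) unfolding mindep_def by auto
  qed
qed

abbreviation "W \<equiv> {a + w | a w. a \<in> F \<and> w \<in> range (\<lambda>y. s y - y)}"

lemma PiA_sub: "subspace (range (\<lambda>y. s y - y))"
proof (rule subspaceI)
  show "0 \<in> range (\<lambda>y. s y - y)" by (rule image_eqI[of _ _ 0]) (auto simp: s_zero)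
next
  fix x y assume "x \<in> range (\<lambda>y. s y - y)" "y \<in> range (\<lambda>y. s y - y)"
  then obtain u v where "x = s u - u" "y = s v - v" by blast
  then show "x + y \<in> range (\<lambda>y. s y - y)" by (intro image_eqI[of _ _ "u + v"]) (auto simp: s_add)
next
  fix c x assume "x \<in> range (\<lambda>y. s y - y)"
  then obtain u where "x = s u - u" by blast
  then show "scale c x \<in> range (\<lambda>y. s y - y)"
    by (intro image_eqI[of _ _ "scale c u"]) (auto simp: s_lin scale_right_diff_distrib)
qed

lemma s_negz: "s (- z) - (- z) = - (s z - z)"
  using sp_minus[of 1 z] by simp

lemma W_intro: "f \<in> F \<Longrightarrow> f + (s y - y) \<in> W"
  by blast

lemma W_sub: "subspace W"
  by (rule subspace_plus[OF F_sub PiA_sub])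

lemma W_2: "scale 2 x \<in> W"
proof -
  obtain q where q: "monom (1::'a) h - 1 = [:-1, 1:] * q" using pi_dvd_monom[of h] unfolding dvd_def by blast
  define z where "z = ga q x"
  have e1: "ga (monom 1 h - 1) x = s z - z" unfolding q z_def by (simp only: ga_mult ga_pi)
  have e2: "ga (monom 1 h - 1) x = tau x - x" by (simp only: ga_diff_poly ga_monom ga_one)
  have e3: "s (- z) - (- z) = - (s z - z)" using sp_minus[of 1 z] by simp
  have "x - tau x = s (- z) - (- z)" unfolding e3 e1[symmetric] e2 by simp
  then have "x - tau x \<in> range (\<lambda>y. s y - y)" by blast
  moreover have "scale 2 x = T x + (x - tau x)" by (simp add: scale2 T_def')
  ultimately show ?thesis using T_in_F by blast
qed

lemma ga_2: "ga 2 x = scale 2 x"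
proof -
  have e: "(2::'a poly) = 1 + 1" by simp
  show ?thesis unfolding e scale2 by (simp only: ga_add_poly ga_one)
qed

lemma tors1:
  assumes "ga [:-1, 1:] z \<in> F" shows "z \<in> F"
proof -
  have a: "tau (s z - z) = s z - z" using assms by (simp add: ga_pi F_iff)
  define w where "w = tau z - z"
  have "s w - w = tau (s z - z) - (s z - z)"
    by (simp add: w_def s_diff sp_diff funpow_swap1)
  then have sw: "s w = w" using a by simp
  have "(s ^^ i) w = w" for i by (induct i) (auto simp: sw)
  then have "tau w = w" by blast
  moreover have "tau w = - w" by (simp add: w_def sp_diff tau_tau tau_tau')
  ultimately have "w + w = 0" by (metis add.right_inverse)
  then have "scale 2 w = 0" by (simp add: scale2)
  then have "w = 0" using tf two_nz[OF Ok] by blast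
  then show ?thesis by (simp add: w_def F_iff)
qed

lemma torsk: "ga ([:-1, 1:] ^ k) z \<in> F \<Longrightarrow> z \<in> F"
proof (induct k arbitrary: z)
  case 0 then show ?case by (simp add: ga_one)
next
  case (Suc k)
  then have "ga [:-1, 1:] (ga ([:-1, 1:] ^ k) z) \<in> F" by (simp only: ga_mult[symmetric] power_Suc)
  then show ?case using tors1 Suc(1) by blast
qed

lemma pi_h: "\<exists>r. [:-1, 1::'a:] ^ h = 1 + monom 1 h + 2 * r"
  using pi_pow2[of "n - 1"] by simp

lemma pi_hm: "\<exists>a b. [:-1, 1::'a:] ^ (h * m) = 2 ^ m * a + b * (1 + monom 1 h)"
proof (induct m)
  case 0 then show ?case by (intro exI[of _ 1] exI[of _ 0]) simp
next
  case (Suc m)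
  then obtain a b where ab: "[:-1, 1::'a:] ^ (h * m) = 2 ^ m * a + b * (1 + monom 1 h)" by blast
  obtain r where r: "[:-1, 1::'a:] ^ h = 1 + monom 1 h + 2 * r" using pi_h by blast
  have "[:-1, 1::'a:] ^ (h * Suc m) = [:-1, 1::'a:] ^ (h * m) * [:-1, 1::'a:] ^ h"
    by (simp add: power_add)
  also have "\<dots> = 2 ^ Suc m * (a * r) + (2 ^ m * a + b * (1 + monom 1 h) + 2 * r * b) * (1 + monom 1 h)"
    unfolding ab r by (simp add: algebra_simps)
  finally show ?case by blast
qed


lemma ring_rearr1: "(c::'b::comm_ring_1) = p * q + d * (D - p * w) \<Longrightarrow> c = (q - d * w) * p + d * D"
  by (simp add: algebra_simps)

lemma ring_rearr2: "(a::'b::comm_ring_1) = a' * p + b' * D \<Longrightarrow> c = a * P + b * D \<Longrightarrow> c = a' * (p * P) + (b' * P + b) * D"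
  by (simp add: algebra_simps)

lemma ring_rearr3: "(c::'b::comm_ring_1) = a * P + b * D \<Longrightarrow> P = t * A + B * D \<Longrightarrow> c = t * (a * A) + (a * B + b) * D"
  by (simp add: algebra_simps)

lemma lev1:
  assumes iX: "mindep scale W X" and S: "finite S" "S \<subseteq> X"
    and sum: "(\<Sum>j\<in>S. ga (c j) j) \<in> F"
  shows "\<forall>j\<in>S. \<exists>a b. c j = a * [:-1, 1:] + b * (1 + monom 1 h)"
proof -
  define e where "e j = poly (c j) 1" for j
  have "\<forall>j. \<exists>q. c j = [:-1, 1:] * q + [:e j:]"
  proof
    fix j
    have "poly (c j - [:e j:]) 1 = 0" by (simp add: e_def)
    then have "[:-1, 1:] dvd c j - [:e j:]" using poly_eq_0_iff_dvd[of "c j - [:e j:]" 1] by simp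
    then obtain q where "c j - [:e j:] = [:-1, 1:] * q" unfolding dvd_def by blast
    then show "\<exists>q. c j = [:-1, 1:] * q + [:e j:]" by (intro exI[of _ q]) (simp add: algebra_simps)
  qed
  then obtain q where q: "\<And>j. c j = [:-1, 1:] * q j + [:e j:]" by metis
  define z where "z = (\<Sum>j\<in>S. ga (q j) j)"
  have cj: "ga (c j) j = scale (e j) j + ga [:-1, 1:] (ga (q j) j)" for j
    by (subst q) (simp only: ga_add_poly ga_mult ga_const add.commute)
  have eqA: "(\<Sum>j\<in>S. ga (c j) j) = (\<Sum>j\<in>S. scale (e j) j) + (s z - z)"
    unfolding cj sum.distrib z_def ga_sum[symmetric] by (simp only: ga_pi)
  have eqB: "(\<Sum>j\<in>S. scale (e j) j) = (\<Sum>j\<in>S. ga (c j) j) + (s (- z) - (- z))"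
    unfolding s_negz eqA by simp
  have "(\<Sum>j\<in>S. scale (e j) j) \<in> W" unfolding eqB by (rule W_intro[OF sum])
  then have e2: "\<forall>j\<in>S. 2 dvd e j" using iX S unfolding mindep_def by blast
  obtain w0 where w0: "monom (1::'a) h - 1 = [:-1, 1::'a:] * w0" using pi_dvd_monom[of h] unfolding dvd_def by blast
  show ?thesis
  proof
    fix j assume "j \<in> S"
    then obtain d where d: "e j = 2 * d" using e2 by blast
    have two: "(1 + monom 1 h) - (monom 1 h - 1) = (2::'a poly)" by simp
    have "[:e j:] = [:d:] * 2" by (simp add: d numeral_poly mult.commute)
    also have "\<dots> = [:d:] * ((1 + monom 1 h) - [:-1, 1:] * w0)" unfolding w0[symmetric] two ..
    finally have "c j = [:-1, 1:] * q j + [:d:] * ((1 + monom 1 h) - [:-1, 1:] * w0)"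
      using q[of j] by simp
    then have "c j = (q j - [:d:] * w0) * [:-1, 1:] + [:d:] * (1 + monom 1 h)"
      by (rule ring_rearr1)
    then show "\<exists>a b. c j = a * [:-1, 1:] + b * (1 + monom 1 h)" by blast
  qed
qed

lemma levk:
  assumes iX: "mindep scale W X" and S: "finite S" "S \<subseteq> X"
    and sum: "(\<Sum>j\<in>S. ga (c j) j) \<in> F"
  shows "\<forall>j\<in>S. \<exists>a b. c j = a * [:-1, 1:] ^ k + b * (1 + monom 1 h)"
proof (induct k)
  case 0
  show ?case
  proof
    fix j assume "j \<in> S"
    show "\<exists>a b. c j = a * [:-1, 1:] ^ 0 + b * (1 + monom 1 h)"
      by (rule exI[of _ "c j"], rule exI[of _ 0]) simp
  qed
next
  case (Suc k)
  then obtain a b where ab: "\<forall>j\<in>S. c j = a j * [:-1, 1:] ^ k + b j * (1 + monom 1 h)"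
    by metis
  have "(\<Sum>j\<in>S. ga (c j) j) = (\<Sum>j\<in>S. ga ([:-1, 1:] ^ k) (ga (a j) j) + T (ga (b j) j))"
    using ab by (intro sum.cong) (auto simp: ga_add_poly ga_mult[symmetric] mult.commute ga_D[symmetric])
  also have "\<dots> = ga ([:-1, 1:] ^ k) (\<Sum>j\<in>S. ga (a j) j) + T (\<Sum>j\<in>S. ga (b j) j)"
    by (simp add: sum.distrib ga_sum T_sum)
  finally have "ga ([:-1, 1:] ^ k) (\<Sum>j\<in>S. ga (a j) j) = (\<Sum>j\<in>S. ga (c j) j) - T (\<Sum>j\<in>S. ga (b j) j)"
    by simp
  then have "ga ([:-1, 1:] ^ k) (\<Sum>j\<in>S. ga (a j) j) \<in> F"
    using sum T_in_F F_sub by (simp add: subspace_diff)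
  then have "(\<Sum>j\<in>S. ga (a j) j) \<in> F" by (rule torsk)
  then have "\<forall>j\<in>S. \<exists>a' b'. a j = a' * [:-1, 1:] + b' * (1 + monom 1 h)" by (rule lev1[OF iX S])
  then show ?case
  proof (intro ballI)
    fix j assume "\<forall>j\<in>S. \<exists>a' b'. a j = a' * [:-1, 1:] + b' * (1 + monom 1 h)" "j \<in> S"
    then obtain a' b' where "a j = a' * [:-1, 1:] + b' * (1 + monom 1 h)" by blast
    moreover have "c j = a j * [:-1, 1:] ^ k + b j * (1 + monom 1 h)" using ab \<open>j \<in> S\<close> by blast
    ultimately have "c j = a' * ([:-1, 1:] * [:-1, 1:] ^ k) + (b' * [:-1, 1:] ^ k + b j) * (1 + monom 1 h)"
      by (intro ring_rearr2)
    then have "c j = a' * [:-1, 1:] ^ Suc k + (b' * [:-1, 1:] ^ k + b j) * (1 + monom 1 h)"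
      by (simp only: power_Suc)
    then show "\<exists>a b. c j = a * [:-1, 1:] ^ Suc k + b * (1 + monom 1 h)" by blast
  qed
qed

lemma indep_final:
  assumes iX: "mindep scale W X" and S: "finite S" "S \<subseteq> X"
    and sum: "(\<Sum>j\<in>S. ga (c j) j) \<in> F" and j: "j \<in> S"
  shows "c j \<in> trH_ideal n"
proof -
  have "\<forall>m. \<exists>a b. c j = 2 ^ m * a + b * (1 + monom 1 h)"
  proof
    fix m
    obtain a b where ab: "c j = a * [:-1, 1:] ^ (h * m) + b * (1 + monom 1 h)"
      using levk[OF iX S sum, of "h * m"] j by blast
    obtain \<alpha> \<beta> where al: "[:-1, 1::'a:] ^ (h * m) = 2 ^ m * \<alpha> + \<beta> * (1 + monom 1 h)"
      using pi_hm by blast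
    have "c j = 2 ^ m * (a * \<alpha>) + (a * \<beta> + b) * (1 + monom 1 h)"
      using ab al by (rule ring_rearr3)
    then show "\<exists>a b. c j = 2 ^ m * a + b * (1 + monom 1 h)" by blast
  qed
  then have "(1 + monom 1 h) dvd c j"
    by (intro dvd_of_pow2) (auto intro: pow2_zero[OF Ok])
  then obtain q where "c j = (1 + monom 1 h) * q" unfolding dvd_def by blast
  then show ?thesis unfolding trH_ideal_def
    by (intro CollectI exI[of _ 0] exI[of _ q]) (simp add: mult.commute)
qed


lemma part2:
  assumes QB: "qbasis scale {c. (2::'a) dvd c} (range T) R T B"
  shows "\<exists>X. B \<subseteq> X \<and> qbasis ga (trH_ideal n) UNIV F id X"
proof -
  interpret L: module ga by (rule module_ga)
  have QBi: "\<And>S c. finite S \<Longrightarrow> S \<subseteq> B \<Longrightarrow> (\<Sum>j\<in>S. scale (c j) (T j)) \<in> R \<Longrightarrow> \<forall>j\<in>S. 2 dvd c j"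
    using QB unfolding qbasis_def by auto
  have mB: "mindep scale W B" unfolding mindep_def
  proof (intro allI impI)
    fix S c assume S: "finite S" "S \<subseteq> B" "(\<Sum>j\<in>S. scale (c j) j) \<in> W"
    then obtain f y where fy: "(\<Sum>j\<in>S. scale (c j) j) = f + (s y - y)" "f \<in> F" by blast
    have "(\<Sum>j\<in>S. scale (c j) (T j)) = T (\<Sum>j\<in>S. scale (c j) j)" by (simp add: T_sum T_scale)
    also have "\<dots> = (s (T y) - T y) + scale 2 f" unfolding fy(1)
      by (simp add: T_add T_diff T_s T_F[OF fy(2)] add.commute)
    finally have "(\<Sum>j\<in>S. scale (c j) (T j)) \<in> R" unfolding relQ_def using fy(2) by blast
    then show "\<forall>j\<in>S. 2 dvd c j" using QBi S by blast
  qed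
  obtain Y where Y: "Y \<subseteq> G0" "mindep scale W (B \<union> Y)"
     "G0 \<subseteq> {a + w | a w. a \<in> span (B \<union> Y) \<and> w \<in> W}"
    using ext_indep[OF unit2 W_sub G0_fin _ W_2 mB, of UNIV] by auto
  define X where "X = B \<union> Y"
  have S1: "x \<in> {a + w | a w. a \<in> span X \<and> w \<in> W}" for x
  proof -
    have sub: "subspace {a + w | a w. a \<in> span X \<and> w \<in> W}"
      by (rule subspace_plus) (auto simp: W_sub)
    have "span G0 \<subseteq> {a + w | a w. a \<in> span X \<and> w \<in> W}"
      by (rule span_minimal) (use Y(3) sub X_def in auto)
    then have "UNIV \<subseteq> {a + w | a w. a \<in> span X \<and> w \<in> W}" unfolding span_G0 .
    then show ?thesis by (rule subsetD) (rule UNIV_I)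
  qed
  have LS_sub: "subspace (L.span X)"
  proof (rule subspaceI)
    show "0 \<in> L.span X" by (rule L.span_zero)
  next
    fix x y assume "x \<in> L.span X" "y \<in> L.span X" then show "x + y \<in> L.span X" by (rule L.span_add)
  next
    fix c x assume "x \<in> L.span X"
    then have "ga [:c:] x \<in> L.span X" by (rule L.span_scale)
    then show "scale c x \<in> L.span X" by (simp add: ga_const)
  qed
  define P where "P = {q + f | q f. q \<in> L.span X \<and> f \<in> F}"
  have P_sub: "subspace P" unfolding P_def by (rule subspace_plus[OF LS_sub F_sub])
  have P_ga: "ga p x \<in> P" if xP: "x \<in> P" for p x
  proof -
    obtain q f where "x = q + f" "q \<in> L.span X" "f \<in> F" using xP unfolding P_def by blast
    then show ?thesis unfolding P_def
      by (intro CollectI exI[of _ "ga p q"] exI[of _ "ga p f"]) (auto simp: ga_add intro: L.span_scale F_ga)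
  qed
  have FP: "f \<in> P" if "f \<in> F" for f
    unfolding P_def using that L.span_zero by force
  have spP: "span X \<subseteq> P"
  proof -
    have "span X \<subseteq> L.span X" by (rule span_minimal[OF L.span_superset LS_sub])
    then show ?thesis unfolding P_def using subspace_0[OF F_sub] by force
  qed
  have S2: "\<forall>x. \<exists>p\<in>P. \<exists>y. x = p + ga ([:-1, 1:] ^ k) y" for k
  proof (induct k)
    case 0
    show ?case
    proof
      fix x
      have "x = 0 + ga ([:-1, 1:] ^ 0) x" by (simp add: ga_one)
      then show "\<exists>p\<in>P. \<exists>y. x = p + ga ([:-1, 1:] ^ 0) y" using subspace_0[OF P_sub] by blast
    qed
  next
    case (Suc k)
    show ?case
    proof
      fix x
      obtain p y where py: "p \<in> P" "x = p + ga ([:-1, 1:] ^ k) y" using Suc by blast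
      obtain a f z where afz: "y = a + (f + (s z - z))" "a \<in> span X" "f \<in> F"
        using S1[of y] by blast
      have "x = (p + ga ([:-1, 1:] ^ k) (a + f)) + ga ([:-1, 1:] ^ Suc k) z"
        unfolding py afz(1) by (simp add: ga_add ga_mult[symmetric] ga_pi[symmetric] power_Suc2 add_ac)
      moreover have "p + ga ([:-1, 1:] ^ k) (a + f) \<in> P"
      proof -
        have "a + f \<in> P" using afz spP FP P_sub subspace_add by blast
        then have "ga ([:-1, 1:] ^ k) (a + f) \<in> P" by (rule P_ga)
        then show ?thesis using py(1) P_sub subspace_add by blast
      qed
      ultimately show "\<exists>p\<in>P. \<exists>y. x = p + ga ([:-1, 1:] ^ Suc k) y" by blast
    qed
  qed
  have S3: "\<forall>x\<in>span G0. \<exists>p\<in>P. \<exists>z\<in>span G0. x = p + scale 2 z"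
  proof
    fix x
    obtain r where r: "[:-1, 1::'a:] ^ h = 1 + monom 1 h + 2 * r" using pi_h by blast
    obtain p y where py: "p \<in> P" "x = p + ga ([:-1, 1:] ^ h) y" using S2 by blast
    have "x = (p + T y) + scale 2 (ga r y)"
      unfolding py r ga_add_poly[of "1 + monom 1 h"] ga_D ga_mult ga_2 by (simp only: add.assoc)
    moreover have "p + T y \<in> P" using py(1) FP[OF T_in_F] P_sub subspace_add by blast
    ultimately show "\<exists>p\<in>P. \<exists>z\<in>span G0. x = p + scale 2 z" using span_G0 by blast
  qed
  have allP: "x \<in> P" for x
    using nakayama[OF unit2 two_nu[OF Ok] G0_fin P_sub S3] span_G0 by auto
  have "qbasis ga (trH_ideal n) UNIV F id X"
    unfolding qbasis_def
  proof (intro conjI allI ballI impI)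
    show "id ` X \<subseteq> UNIV" by simp
  next
    fix y :: 'm
    obtain q f where qf: "y = q + f" "q \<in> L.span X" "f \<in> F" using allP[of y] unfolding P_def by blast
    then obtain t r where tr: "finite t" "t \<subseteq> X" "q = (\<Sum>v\<in>t. ga (r v) v)"
      unfolding L.span_explicit by blast
    show "\<exists>S c. finite S \<and> S \<subseteq> X \<and> y - (\<Sum>j\<in>S. ga (c j) (id j)) \<in> F"
      using qf tr by (intro exI[of _ t] exI[of _ r]) auto
  next
    fix S c j assume "finite S" "S \<subseteq> X" "(\<Sum>j\<in>S. ga (c j) (id j)) \<in> F" "j \<in> S"
    then show "c j \<in> trH_ideal n" using indep_final[of X S c j] Y(2) X_def by auto
  qed
  then show ?thesis using X_def by blast
qed


end


theorem lemma2p2: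
  fixes scale :: "'a::idom \<Rightarrow> 'm::ab_group_add \<Rightarrow> 'm"
    and s :: "'m \<Rightarrow> 'm" and n :: nat
  assumes Ok: "unram_Z2_int TYPE('a)"
    and modl: "module scale"
    and n: "n \<ge> 1"
    and s_add: "\<forall>x y. s (x + y) = s x + s y"
    and s_lin: "\<forall>c x. s (scale c x) = scale c (s x)"
    and s_ord: "s ^^ (2 ^ n) = id"
    and fg: "\<exists>S. finite S \<and> (\<forall>x. \<exists>c. x = (\<Sum>g\<in>S. gact scale s (c g) g))"
    and tf: "\<forall>c x. scale c x = 0 \<longrightarrow> c = 0 \<or> x = 0"
  shows "(\<exists>X. qbasis scale {c. (2::'a) dvd c} (range (TrH s n)) (relQ scale s n) id X)
    \<and> (\<forall>B. qbasis scale {c. (2::'a) dvd c} (range (TrH s n)) (relQ scale s n) (TrH s n) B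
           \<longrightarrow> (\<exists>X. B \<subseteq> X \<and> qbasis (gact scale s) (trH_ideal n) UNIV (fixH s n) id X))"
proof -
  obtain S0 where S0: "finite S0" "\<forall>x. \<exists>c. x = (\<Sum>g\<in>S0. gact scale s (c g) g)" using fg by blast
  interpret M: msetup scale s n S0
    by (rule msetup.intro[OF gset.intro[OF modl] msetup_axioms.intro])
       (use s_add s_lin Ok n s_ord tf S0 in \<open>auto simp: gset_axioms_def\<close>)
  show ?thesis using M.part1 M.part2 by blast
qed

end
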